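(* Let $\Lambda$ satisfy (RC). For $\ell\in\Lambda$ and $n\in\mathbb N$ let $$\mathscr B_n(\ell):=\{(\ell_1,\ell_2)\in\Lambda\times\Lambda:\ n-1<|\ell_1-\ell_2|\le n,\ \ell\in\mathscr P(\ell_1,\ell_2)\}.$$ The nearest-neighbour paths $\mathscr P(\ell_1,\ell_2)$ (paths $\ell_1=k_1,k_2,\dots,k_{N+1}=\ell_2$ in $\Lambda$ with $k_{i+1}\in\mathcal N(k_i)$ and $N\le C|\ell_1-\ell_2|$) may be chosen such that there is $C>0$ with $|\mathscr B_n(\ell)|\le Cn^d$ for all $\ell\in\Lambda$ and all $n\in\mathbb N$.
   Context: Let $d\in\{2,3\}$; $B_R$ is the open ball of radius $R$ at $0$. $A\in\mathbb R^{d\times d}$ nonsingular, $\Lambda^{\rm h}:=A\mathbb Z^d$, with $A$ chosen so that $\ell\pm Ae_i$ are Voronoi neighbours of $\ell$ in $\Lambda^{\rm h}$. A set $\Lambda\subset\mathbb R^d$ satisfies (RC) if there is $R_{\rm def}>0$ with $\Lambda\setminus B_{R_{\rm def}}=\Lambda^{\rm h}\setminus B_{R_{\rm def}}$ and $\Lambda\cap B_{R_{\rm def}}$ finite. For $\ell\in\Lambda$, $\mathcal N(\ell)$ is the set of $m\in\Lambda\setminus\{\ell\}$ for which there exists $a\in\mathbb R^d$ with $|a-\ell|=|a-m|\le|a-k|$ for all $k\in\Lambda$. $|X|$ denotes the cardinality of a finite set $X$; "$\ell\in\mathscr P(\ell_1,\ell_2)$" means $\ell$ is one of the points of the path. *)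

theory Defs
  imports "HOL-Analysis.Analysis"
begin

definition hom_lattice :: "real^'n^'n \<Rightarrow> (real^'n) set" where
  "hom_lattice A = {A *v z | z. \<forall>i. z $ i \<in> \<int>}"

definition RC :: "(real^'n) set \<Rightarrow> real^'n^'n \<Rightarrow> bool" where
  "RC \<Lambda> A \<longleftrightarrow> (\<exists>R>0. \<Lambda> - ball 0 R = hom_lattice A - ball 0 R \<and> finite (\<Lambda> \<inter> ball 0 R))"

definition vor_nbrs :: "(real^'n) set \<Rightarrow> real^'n \<Rightarrow> (real^'n) set" where
  "vor_nbrs \<Lambda> l = {m \<in> \<Lambda> - {l}. \<exists>a. dist a l = dist a m \<and> (\<forall>k\<in>\<Lambda>. dist a l \<le> dist a k)}"

definition nn_path :: "(real^'n) set \<Rightarrow> real \<Rightarrow> real^'n \<Rightarrow> real^'n \<Rightarrow> (real^'n) list \<Rightarrow> bool" where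
  "nn_path \<Lambda> C l1 l2 p \<longleftrightarrow> p \<noteq> [] \<and> hd p = l1 \<and> last p = l2 \<and> set p \<subseteq> \<Lambda> \<and>
     (\<forall>i. Suc i < length p \<longrightarrow> p ! Suc i \<in> vor_nbrs \<Lambda> (p ! i)) \<and>
     real (length p - 1) \<le> C * dist l1 l2"

definition Bn :: "(real^'n) set \<Rightarrow> (real^'n \<Rightarrow> real^'n \<Rightarrow> (real^'n) list) \<Rightarrow> real^'n \<Rightarrow> nat \<Rightarrow> ((real^'n) \<times> (real^'n)) set" where
  "Bn \<Lambda> P l n = {(l1, l2) \<in> \<Lambda> \<times> \<Lambda>. real n - 1 < dist l1 l2 \<and> dist l1 l2 \<le> real n \<and> l \<in> set (P l1 l2)}"

end

theory Submission
  imports Defs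
begin

lemma pack_count:
  fixes P :: "'a::euclidean_space set"
  assumes fin: "finite P" and e: "e > 0"
    and sep: "\<And>p q. p\<in>P \<Longrightarrow> q\<in>P \<Longrightarrow> p\<noteq>q \<Longrightarrow> 2*e \<le> dist p q"
    and sub: "\<And>p. p\<in>P \<Longrightarrow> ball p e \<subseteq> V" and V: "V \<in> sets lborel" "emeasure lborel V < \<infinity>"
  shows "real (card P) * measure lborel (ball (0::'a) e) \<le> measure lborel V"
proof -
  have disj: "disjoint_family_on (\<lambda>p. ball p e) P"
    unfolding disjoint_family_on_def
  proof (intro ballI impI)
    fix p q assume "p\<in>P" "q\<in>P" "p\<noteq>q"
    then have "2*e \<le> dist p q" using sep by auto
    then show "ball p e \<inter> ball q e = {}"
      by (auto simp: ball_def) (metis dist_commute dist_triangle less_le_not_le add_strict_mono mult_2 order.trans)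
  qed
  have "measure lborel (\<Union>p\<in>P. ball p e) = (\<Sum>p\<in>P. measure lborel (ball p e))"
    by (rule measure_finite_Union[OF fin]) (use disj emeasure_lborel_ball_finite in \<open>auto simp: less_top\<close>)
  also have "\<dots> = real (card P) * measure lborel (ball (0::'a) e)"
    using e by (simp add: content_ball)
  finally have eq: "measure lborel (\<Union>p\<in>P. ball p e) = real (card P) * measure lborel (ball (0::'a) e)" .
  have "measure lborel (\<Union>p\<in>P. ball p e) \<le> measure lborel V"
  proof (rule measure_mono_fmeasurable)
    show "(\<Union>p\<in>P. ball p e) \<subseteq> V" using sub by auto
    show "(\<Union>p\<in>P. ball p e) \<in> sets lborel" using fin by (intro sets.finite_UN) auto
    show "V \<in> fmeasurable lborel" using V by (intro fmeasurableI) auto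
  qed
  with eq show ?thesis by simp
qed



lemma sep_count_gen:
  fixes P :: "'a::euclidean_space set"
  assumes e: "e > 0"
    and sep: "\<And>p q. p\<in>P \<Longrightarrow> q\<in>P \<Longrightarrow> p\<noteq>q \<Longrightarrow> 2*e \<le> dist p q"
    and ab: "a \<le> b" "0 \<le> b"
    and sub: "\<And>p. p\<in>P \<Longrightarrow> a < dist c p \<and> dist c p \<le> b"
  shows "finite P \<and> real (card P) * (unit_ball_vol DIM('a) * e ^ DIM('a))
           \<le> unit_ball_vol DIM('a) * ((b+e) ^ DIM('a) - (max 0 (a-e)) ^ DIM('a))"
proof -
  define a' where "a' = max 0 (a-e)"
  define V where "V = cball c (b+e) - ball c a'"
  have a'0: "0 \<le> a'" and a'b: "a' \<le> b+e" using ab e by (auto simp: a'_def)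
  have Vm: "V \<in> sets lborel" by (simp add: V_def)
  have Vf: "emeasure lborel V < \<infinity>"
    by (rule le_less_trans[OF emeasure_mono emeasure_lborel_cball_finite[of c "b+e"]]) (auto simp: V_def)
  have cV: "measure lborel V = unit_ball_vol DIM('a) * ((b+e) ^ DIM('a) - a' ^ DIM('a))"
  proof -
    have "measure lborel V = measure lborel (cball c (b+e)) - measure lborel (ball c a')"
      unfolding V_def
      by (rule measure_Diff) (use a'b emeasure_lborel_cball_finite[of c "b+e"] in \<open>auto simp: less_top\<close>)
    also have "\<dots> = unit_ball_vol DIM('a) * ((b+e) ^ DIM('a) - a' ^ DIM('a))"
      using a'0 ab e by (simp add: content_ball content_cball algebra_simps)
    finally show ?thesis .
  qed
  have ballsub: "ball p e \<subseteq> V" if "p \<in> P" for p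
  proof
    fix x assume "x \<in> ball p e"
    then have dx: "dist p x < e" by auto
    have "dist c x \<le> dist c p + dist p x" by (rule dist_triangle)
    moreover have "dist c p \<le> dist c x + dist p x" using dist_triangle[of c p x] by (simp add: dist_commute)
    ultimately have h1: "dist c x \<le> b + e" and h2: "a - e \<le> dist c x"
      using sub[OF that] dx e by linarith+
    then have "a' \<le> dist c x" by (simp add: a'_def)
    then show "x \<in> V" using h1 by (simp add: V_def)
  qed
  have cb: "0 < unit_ball_vol DIM('a) * e ^ DIM('a)" using e by simp
  have fin_bd: "real (card G) * (unit_ball_vol DIM('a) * e ^ DIM('a)) \<le> measure lborel V"
    if "G \<subseteq> P" "finite G" for G
  proof -
    have "real (card G) * measure lborel (ball (0::'a) e) \<le> measure lborel V"
      by (rule pack_count[OF \<open>finite G\<close> e _ _ Vm Vf]) (use that sep ballsub in blast)+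
    then show ?thesis using e by (simp add: content_ball)
  qed
  have "finite P \<and> card P \<le> nat \<lceil>measure lborel V / (unit_ball_vol DIM('a) * e ^ DIM('a))\<rceil>"
  proof (rule finite_if_finite_subsets_card_bdd)
    fix G assume G: "G \<subseteq> P" "finite G"
    have "real (card G) \<le> measure lborel V / (unit_ball_vol DIM('a) * e ^ DIM('a))"
      using fin_bd[OF G] cb by (simp add: pos_le_divide_eq)
    then show "card G \<le> nat \<lceil>measure lborel V / (unit_ball_vol DIM('a) * e ^ DIM('a))\<rceil>"
      by linarith
  qed
  then have "finite P" by simp
  moreover have "real (card P) * (unit_ball_vol DIM('a) * e ^ DIM('a)) \<le> measure lborel V"
    using fin_bd[OF order.refl \<open>finite P\<close>] .
  ultimately show ?thesis using cV a'_def by simp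
qed

lemma pow_diff_le:
  fixes x y :: real
  assumes "0 \<le> y" "y \<le> x"
  shows "x^k - y^k \<le> real k * (x-y) * x^(k-1)"
proof (induction k)
  case 0 then show ?case by simp
next
  case (Suc k)
  have yk: "y^k \<le> x^k" using assms by (simp add: power_mono)
  have "x^Suc k - y^Suc k = x*(x^k - y^k) + (x-y)*y^k" by (simp add: algebra_simps)
  also have "\<dots> \<le> x*(real k * (x-y) * x^(k-1)) + (x-y)*x^k"
    using Suc assms yk by (intro add_mono mult_left_mono mult_left_mono) auto
  also have "\<dots> = real (Suc k) * (x-y) * x^k"
  proof (cases k)
    case 0 then show ?thesis by simp
  next
    case (Suc m) then show ?thesis by (simp add: algebra_simps)
  qed
  finally show ?case by simp
qed

lemma shell_poly_bound:
  fixes n e :: real and d :: nat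
  assumes n: "1 \<le> n" and e: "0 < e" and d: "1 \<le> d"
  shows "(n+e)^d - (max 0 (n-1-e))^d \<le> real d * (1+2*e) * (1+e)^(d-1) * n^(d-1)"
proof -
  have ne: "n + e \<le> (1+e) * n" using n e by (simp add: algebra_simps)
  have pw: "(n+e)^(d-1) \<le> (1+e)^(d-1) * n^(d-1)"
    using power_mono[OF ne, of "d-1"] n e by (simp add: power_mult_distrib)
  show ?thesis
  proof (cases "n-1-e \<le> 0")
    case True
    then have m: "max 0 (n-1-e) = 0" by simp
    have "(n+e)^d = (n+e)^(d-1) * (n+e)" using power_minus_mult[of d "n+e"] d by simp
    also have "\<dots> \<le> ((1+e)^(d-1) * n^(d-1)) * (1+2*e)"
    proof (rule mult_mono[OF pw])
      show "n + e \<le> 1 + 2*e" using True by simp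
      show "0 \<le> (1+e)^(d-1) * n^(d-1)" using n e by simp
      show "0 \<le> n + e" using n e by simp
    qed
    also have "\<dots> \<le> real d * (1+2*e) * (1+e)^(d-1) * n^(d-1)"
    proof -
      have "0 \<le> (1+2*e) * (1+e)^(d-1) * n^(d-1)" using e n by simp
      then have "1 * ((1+2*e) * (1+e)^(d-1) * n^(d-1)) \<le> real d * ((1+2*e) * (1+e)^(d-1) * n^(d-1))"
        using d by (intro mult_right_mono) auto
      then show ?thesis by (simp add: algebra_simps)
    qed
    finally show ?thesis using m d by (simp add: power_0_left)
  next
    case False
    then have m: "max 0 (n-1-e) = n-1-e" by simp
    have "(n+e)^d - (n-1-e)^d \<le> real d * ((n+e) - (n-1-e)) * (n+e)^(d-1)"
      using False e by (intro pow_diff_le) auto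
    also have "\<dots> = real d * (1+2*e) * (n+e)^(d-1)" by simp
    also have "\<dots> \<le> real d * (1+2*e) * ((1+e)^(d-1) * n^(d-1))"
      using pw e by (intro mult_left_mono) auto
    finally show ?thesis using m by (simp add: algebra_simps)
  qed
qed



definition Zs :: "(real^'n) set" where "Zs = {z. \<forall>i. z$i \<in> \<int>}"

lemma Zs_add: "x \<in> Zs \<Longrightarrow> y \<in> Zs \<Longrightarrow> x + y \<in> Zs" by (auto simp: Zs_def)
lemma Zs_diff: "x \<in> Zs \<Longrightarrow> y \<in> Zs \<Longrightarrow> x - y \<in> Zs" by (auto simp: Zs_def)
lemma Zs_0: "0 \<in> Zs" by (auto simp: Zs_def)
lemma Zs_axis: "axis i 1 \<in> Zs" by (auto simp: Zs_def axis_def)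

lemma Zs_norm: assumes "z \<in> Zs" "z \<noteq> 0" shows "1 \<le> norm z"
proof -
  obtain i where "z$i \<noteq> 0" using assms(2) by (metis vec_eq_iff zero_index)
  moreover obtain k where "z$i = of_int k" using assms(1) by (auto simp: Zs_def elim: Ints_cases)
  ultimately have "1 \<le> \<bar>z$i\<bar>" by auto
  then show ?thesis using component_le_norm_cart[of z i] by linarith
qed

lemma hom_lattice_eq: "hom_lattice A = (\<lambda>z. A *v z) ` Zs"
  by (auto simp: hom_lattice_def Zs_def)

lemma norm_Av_le: "norm (A *v u) \<le> (\<Sum>i\<in>UNIV. \<bar>u$i\<bar> * norm (A *v axis i (1::real)))"
proof -
  have "A *v u = A *v (\<Sum>i\<in>UNIV. u$i *\<^sub>R axis i 1)"
    using basis_expansion[of u] by (simp add: scalar_mult_eq_scaleR)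
  also have "\<dots> = (\<Sum>i\<in>UNIV. u$i *\<^sub>R (A *v axis i 1))"
    by (simp add: linear_sum[OF matrix_vector_mul_linear] matrix_vector_mult_scaleR)
  finally have "norm (A *v u) = norm (\<Sum>i\<in>UNIV. u$i *\<^sub>R (A *v axis i 1))" by simp
  also have "\<dots> \<le> (\<Sum>i\<in>UNIV. norm (u$i *\<^sub>R (A *v axis i 1)))" by (rule norm_sum)
  finally show ?thesis by simp
qed

locale lat =
  fixes A :: "real^'n^'n"
  assumes inv: "invertible A"
begin

definition "L = hom_lattice A"
definition "hh = (\<Sum>i\<in>UNIV. norm (A *v axis i (1::real)))"

lemma hh_nonneg: "0 \<le> hh" by (simp add: hh_def sum_nonneg)

lemma L_eq: "L = (\<lambda>z. A *v z) ` Zs" by (simp add: L_def hom_lattice_eq)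

lemma L_add: "x \<in> L \<Longrightarrow> y \<in> L \<Longrightarrow> x + y \<in> L"
  by (auto simp: L_eq matrix_vector_right_distrib[symmetric] intro!: imageI Zs_add)
lemma L_diff: "x \<in> L \<Longrightarrow> y \<in> L \<Longrightarrow> x - y \<in> L"
  by (auto simp: L_eq matrix_vector_mult_diff_distrib[symmetric] intro!: imageI Zs_diff)
lemma L_0: "0 \<in> L" using Zs_0 by (force simp: L_eq)
lemma L_ax: "A *v axis i 1 \<in> L" using Zs_axis by (force simp: L_eq)

lemma ex_inv: obtains A' where "\<And>x. A' *v (A *v x) = x" "\<And>x. A *v (A' *v x) = x"
  using inv unfolding invertible_def
  by (metis matrix_vector_mul_assoc matrix_vector_mul_lid)

lemma ex_B: obtains B where "B > 0" "\<And>x. norm x \<le> B * norm (A *v x)"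
proof -
  obtain A' where A': "\<And>x. A' *v (A *v x) = x" using ex_inv by metis
  obtain K where K: "K > 0" "\<And>y. norm (A' *v y) \<le> norm y * K"
    using bounded_linear.pos_bounded[OF matrix_vector_mul_bounded_linear[of A']] by blast
  show ?thesis
  proof (rule that[OF K(1)])
    fix x show "norm x \<le> K * norm (A *v x)" using K(2)[of "A *v x"] A'[of x] by (simp add: mult.commute)
  qed
qed

definition "BB = (SOME B. B > 0 \<and> (\<forall>x. norm x \<le> B * norm (A *v x)))"
lemma BB: "BB > 0" "norm x \<le> BB * norm (A *v x)"
proof -
  have "\<exists>B. B > 0 \<and> (\<forall>x. norm x \<le> B * norm (A *v x))" by (metis ex_B)
  from someI_ex[OF this] show "BB > 0" "norm x \<le> BB * norm (A *v x)" unfolding BB_def by auto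
qed

lemma L_sep: assumes "x \<in> L" "y \<in> L" "x \<noteq> y" shows "1 / BB \<le> dist x y"
proof -
  obtain zx zy where z: "zx \<in> Zs" "zy \<in> Zs" "x = A *v zx" "y = A *v zy" using assms by (auto simp: L_eq)
  then have "zx - zy \<noteq> 0" using assms by auto
  then have "1 \<le> norm (zx - zy)" using Zs_norm Zs_diff z by blast
  also have "\<dots> \<le> BB * norm (A *v (zx - zy))" by (rule BB)
  finally show ?thesis using BB(1) z by (simp add: dist_norm matrix_vector_mult_diff_distrib divide_simps mult.commute)
qed

lemma L_dense: "\<exists>y\<in>L. dist x y \<le> hh"
proof -
  obtain A' where A': "\<And>x. A' *v (A *v x) = x" "\<And>x. A *v (A' *v x) = x" using ex_inv by metis
  define w where "w = A' *v x"
  define z :: "real^'n" where "z = (\<chi> i. of_int \<lfloor>w$i\<rfloor>)"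
  have zZ: "z \<in> Zs" by (simp add: z_def Zs_def)
  have "x - A *v z = A *v (w - z)" by (simp add: w_def A' matrix_vector_mult_diff_distrib)
  then have "norm (x - A *v z) \<le> (\<Sum>i\<in>UNIV. \<bar>(w-z)$i\<bar> * norm (A *v axis i (1::real)))"
    using norm_Av_le by metis
  also have "\<dots> \<le> hh" unfolding hh_def
  proof (rule sum_mono)
    fix i
    have "\<bar>(w-z)$i\<bar> \<le> 1" by (simp add: z_def) linarith
    then show "\<bar>(w-z)$i\<bar> * norm (A *v axis i (1::real)) \<le> norm (A *v axis i (1::real))"
      by (simp add: mult_left_le_one_le)
  qed
  finally show ?thesis using zZ by (auto simp: L_eq dist_norm)
qed

definition "ee = 1 / (2*BB)"
lemma ee_pos: "ee > 0" using BB by (simp add: ee_def)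

lemma L_count_gen:
  assumes "a \<le> b" "0 \<le> b"
  shows "finite {x\<in>L. a < dist c x \<and> dist c x \<le> b} \<and>
     real (card {x\<in>L. a < dist c x \<and> dist c x \<le> b}) * (unit_ball_vol CARD('n) * ee ^ CARD('n))
      \<le> unit_ball_vol CARD('n) * ((b+ee) ^ CARD('n) - (max 0 (a-ee)) ^ CARD('n))"
proof -
  have "finite {x\<in>L. a < dist c x \<and> dist c x \<le> b} \<and>
     real (card {x\<in>L. a < dist c x \<and> dist c x \<le> b}) * (unit_ball_vol DIM(real^'n) * ee ^ DIM(real^'n))
      \<le> unit_ball_vol DIM(real^'n) * ((b+ee) ^ DIM(real^'n) - (max 0 (a-ee)) ^ DIM(real^'n))"
  proof (rule sep_count_gen[OF ee_pos _ assms, where c=c])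
    fix p q assume "p \<in> {x\<in>L. a < dist c x \<and> dist c x \<le> b}" "q \<in> {x\<in>L. a < dist c x \<and> dist c x \<le> b}" "p \<noteq> q"
    then have "1/BB \<le> dist p q" using L_sep by blast
    moreover have "2 * ee = 1/BB" using BB(1) by (simp add: ee_def)
    ultimately show "2 * ee \<le> dist p q" by simp
  qed simp
  then show ?thesis by simp
qed

end


context lat begin

lemma card_n_pos: "1 \<le> CARD('n)" by (simp add: Suc_le_eq)

definition "KS = real CARD('n) * (1+2*ee) * (1+ee)^(CARD('n)-1) / ee ^ CARD('n)"

lemma KS_pos: "KS > 0" using ee_pos by (simp add: KS_def)

lemma L_shell:
  assumes n: "1 \<le> n"
  shows "finite {x\<in>L. n-1 < dist c x \<and> dist c x \<le> n} \<and>
         real (card {x\<in>L. n-1 < dist c x \<and> dist c x \<le> n}) \<le> KS * n^(CARD('n)-1)"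
proof -
  let ?S = "{x\<in>L. n-1 < dist c x \<and> dist c x \<le> n}"
  let ?w = "unit_ball_vol CARD('n)" and ?d = "CARD('n)"
  have g: "finite ?S \<and> real (card ?S) * (?w * ee^?d) \<le> ?w * ((n+ee)^?d - (max 0 (n-1-ee))^?d)"
    using L_count_gen[of "n-1" n c] n by simp
  have "(n+ee)^?d - (max 0 (n-1-ee))^?d \<le> real ?d * (1+2*ee) * (1+ee)^(?d-1) * n^(?d-1)"
    by (rule shell_poly_bound[OF n ee_pos card_n_pos])
  then have "real (card ?S) * (?w * ee^?d) \<le> ?w * (real ?d * (1+2*ee) * (1+ee)^(?d-1) * n^(?d-1))"
    using g by (meson mult_left_mono order.trans unit_ball_vol_nonneg of_nat_0_le_iff)
  then have "real (card ?S) * ee^?d \<le> real ?d * (1+2*ee) * (1+ee)^(?d-1) * n^(?d-1)"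
    by (simp add: mult.assoc mult.left_commute[of "?w"])
  then have "real (card ?S) \<le> real ?d * (1+2*ee) * (1+ee)^(?d-1) * n^(?d-1) / ee^?d"
    using ee_pos by (simp add: pos_le_divide_eq)
  then show ?thesis using g by (simp add: KS_def)
qed

lemma L_ball:
  assumes r: "0 \<le> r"
  shows "finite {x\<in>L. dist c x \<le> r} \<and> real (card {x\<in>L. dist c x \<le> r}) \<le> ((r+ee)/ee)^CARD('n)"
proof -
  let ?w = "unit_ball_vol CARD('n)" and ?d = "CARD('n)"
  have eq: "{x\<in>L. -1 < dist c x \<and> dist c x \<le> r} = {x\<in>L. dist c x \<le> r}"
    by (auto intro: less_le_trans[OF _ zero_le_dist])
  have g: "finite {x\<in>L. dist c x \<le> r} \<and> real (card {x\<in>L. dist c x \<le> r}) * (?w * ee^?d) \<le> ?w * ((r+ee)^?d - (max 0 (-1-ee))^?d)"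
    using L_count_gen[of "-1" r c] r by (simp only: eq)
  have m: "max 0 (-1-ee) = 0" using ee_pos by simp
  have "real (card {x\<in>L. dist c x \<le> r}) * ee^?d \<le> (r+ee)^?d"
    using g card_n_pos by (simp add: m mult.assoc mult.left_commute[of "?w"] power_0_left)
  then show ?thesis using g ee_pos by (simp add: pos_le_divide_eq power_divide)
qed

end


lemma sq_id: fixes l k u :: "'a::real_inner"
  shows "(norm (l + s *\<^sub>R u - k))^2 - (norm (l + s *\<^sub>R u - l))^2 = (norm (k-l))^2 - 2 * s * (u \<bullet> (k-l))"
  unfolding power2_norm_eq_inner by (simp add: inner_add_left inner_add_right inner_diff_left inner_diff_right inner_commute algebra_simps power2_eq_square)
lemma sq_id2: fixes l m t :: "'a::real_inner"
  shows "(norm (m - t))^2 = (norm (m-l))^2 - 2 * ((t-l) \<bullet> (m-l)) + (norm (t-l))^2"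
  unfolding power2_norm_eq_inner by (simp add: inner_add_left inner_add_right inner_diff_left inner_diff_right inner_commute algebra_simps power2_eq_square)
lemma mid_id: fixes a l m k :: "'a::real_inner"
  shows "2 * ((norm ((1/2) *\<^sub>R (l + m) - k))^2 - (norm ((1/2) *\<^sub>R (l + m) - l))^2) \<le>
     ((norm (a - k))^2 - (norm (a - l))^2) + ((norm (a - (l + m - k)))^2 - (norm (a - m))^2)"
  unfolding power2_norm_eq_inner by (simp add: inner_add_left inner_add_right inner_diff_left inner_diff_right inner_commute algebra_simps power2_eq_square)

definition chain :: "(real^'n) set \<Rightarrow> (real^'n) list \<Rightarrow> bool" where
  "chain S p \<longleftrightarrow> p \<noteq> [] \<and> set p \<subseteq> S \<and> (\<forall>i. Suc i < length p \<longrightarrow> p ! Suc i \<in> vor_nbrs S (p ! i))"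

lemma chain_single: "x \<in> S \<Longrightarrow> chain S [x]" by (simp add: chain_def)

lemma chain_Cons2: "chain S (x # y # r) \<longleftrightarrow> x \<in> S \<and> y \<in> vor_nbrs S x \<and> chain S (y # r)"
proof
  assume c: "chain S (x # y # r)"
  have "(\<forall>i. Suc i < length (y#r) \<longrightarrow> (y#r) ! Suc i \<in> vor_nbrs S ((y#r) ! i))"
  proof (intro allI impI)
    fix i assume i: "Suc i < length (y#r)"
    have "Suc (Suc i) < length (x#y#r)" using i by simp
    then have "(x#y#r) ! Suc (Suc i) \<in> vor_nbrs S ((x#y#r) ! Suc i)" using c unfolding chain_def by blast
    then show "(y#r) ! Suc i \<in> vor_nbrs S ((y#r) ! i)" by simp
  qed
  moreover have "y \<in> vor_nbrs S x"
  proof -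
    have "Suc 0 < length (x#y#r)" by simp
    then have "(x#y#r) ! Suc 0 \<in> vor_nbrs S ((x#y#r) ! 0)" using c unfolding chain_def by blast
    then show ?thesis by simp
  qed
  ultimately show "x \<in> S \<and> y \<in> vor_nbrs S x \<and> chain S (y # r)" using c by (auto simp: chain_def)
next
  assume h: "x \<in> S \<and> y \<in> vor_nbrs S x \<and> chain S (y # r)"
  show "chain S (x # y # r)" unfolding chain_def
  proof (intro conjI allI impI)
    show "set (x # y # r) \<subseteq> S" using h by (auto simp: chain_def)
    fix i assume i: "Suc i < length (x # y # r)"
    show "(x # y # r) ! Suc i \<in> vor_nbrs S ((x # y # r) ! i)"
    proof (cases i)
      case 0 then show ?thesis using h by simp
    next
      case (Suc j)
      then have "Suc j < length (y#r)" using i by simp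
      then have "(y#r) ! Suc j \<in> vor_nbrs S ((y#r) ! j)" using h unfolding chain_def by blast
      then show ?thesis using Suc by simp
    qed
  qed simp
qed

lemma chain_Cons:
  assumes "l \<in> S" "chain S p" "hd p \<in> vor_nbrs S l" shows "chain S (l # p)"
proof (cases p)
  case Nil then show ?thesis using assms by (simp add: chain_def)
next
  case (Cons y r) then show ?thesis using assms by (simp add: chain_Cons2)
qed

lemma chain_append: "chain S p \<Longrightarrow> chain S q \<Longrightarrow> last p = hd q \<Longrightarrow> chain S (p @ tl q)"
proof (induction p)
  case Nil then show ?case by (simp add: chain_def)
next
  case (Cons x p)
  show ?case
  proof (cases "p = []")
    case True
    then have "q \<noteq> []" "hd q = x" using Cons.prems by (auto simp: chain_def)
    then have "x # tl q = q" by (metis list.collapse)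
    then show ?thesis using Cons.prems True by simp
  next
    case False
    then obtain y r where p: "p = y # r" by (cases p) auto
    then have "chain S p" "x \<in> S" "y \<in> vor_nbrs S x" using Cons.prems chain_Cons2 by auto
    moreover have "last p = hd q" using Cons.prems p by simp
    ultimately have "chain S (p @ tl q)" using Cons.IH Cons.prems by simp
    moreover have "hd (p @ tl q) = y" using p by simp
    ultimately have "chain S (x # (p @ tl q))" using \<open>x \<in> S\<close> \<open>y \<in> vor_nbrs S x\<close> by (intro chain_Cons) auto
    then show ?thesis by simp
  qed
qed

lemma chain_hd_last_nonempty: "chain S p \<Longrightarrow> p \<noteq> []" by (simp add: chain_def)

locale latL = lat A for A :: "real^'n^'n" +
  fixes \<Lambda> :: "(real^'n) set"
  assumes vor: "\<And>l i. l \<in> hom_lattice A \<Longrightarrow>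
                l + A *v axis i 1 \<in> vor_nbrs (hom_lattice A) l \<and>
                l - A *v axis i 1 \<in> vor_nbrs (hom_lattice A) l"
    and rc: "RC \<Lambda> A"
begin

definition "RR = (SOME R. R > 0 \<and> \<Lambda> - ball 0 R = hom_lattice A - ball 0 R \<and> finite (\<Lambda> \<inter> ball 0 R))"

lemma RR: "RR > 0" "\<Lambda> - ball 0 RR = L - ball 0 RR" "finite (\<Lambda> \<inter> ball 0 RR)"
proof -
  have "\<exists>R. R > 0 \<and> \<Lambda> - ball 0 R = hom_lattice A - ball 0 R \<and> finite (\<Lambda> \<inter> ball 0 R)"
    using rc by (auto simp: RC_def)
  from someI_ex[OF this] show "RR > 0" "\<Lambda> - ball 0 RR = L - ball 0 RR" "finite (\<Lambda> \<inter> ball 0 RR)"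
    unfolding RR_def L_def by auto
qed

lemma far_Lam: "x \<in> L \<Longrightarrow> RR \<le> norm x \<Longrightarrow> x \<in> \<Lambda>"
  using RR(2) by (metis DiffD1 DiffI dist_0_norm mem_ball not_less)
lemma far_L: "x \<in> \<Lambda> \<Longrightarrow> RR \<le> norm x \<Longrightarrow> x \<in> L"
  using RR(2) by (metis DiffD1 DiffI dist_0_norm mem_ball not_less)

definition "D0 = card (\<Lambda> \<inter> ball 0 RR)"
definition "HB r = real D0 + ((r+ee)/ee)^CARD('n)"

lemma Lam_cball:
  assumes "0 \<le> r"
  shows "finite (\<Lambda> \<inter> cball c r) \<and> real (card (\<Lambda> \<inter> cball c r)) \<le> HB r"
proof -
  have sub: "\<Lambda> \<inter> cball c r \<subseteq> (\<Lambda> \<inter> ball 0 RR) \<union> {x\<in>L. dist c x \<le> r}"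
    using far_L by (auto simp: dist_0_norm not_less)
  have f: "finite {x\<in>L. dist c x \<le> r}" and cL: "real (card {x\<in>L. dist c x \<le> r}) \<le> ((r+ee)/ee)^CARD('n)"
    using L_ball[OF assms, of c] by auto
  have fin: "finite ((\<Lambda> \<inter> ball 0 RR) \<union> {x\<in>L. dist c x \<le> r})" using f RR(3) by simp
  have "card (\<Lambda> \<inter> cball c r) \<le> card ((\<Lambda> \<inter> ball 0 RR) \<union> {x\<in>L. dist c x \<le> r})"
    by (rule card_mono[OF fin sub])
  also have "\<dots> \<le> D0 + card {x\<in>L. dist c x \<le> r}" unfolding D0_def by (rule card_Un_le)
  finally show ?thesis using cL finite_subset[OF sub fin] by (simp add: HB_def)
qed

lemma Lam_shell:
  assumes "1 \<le> n"
  shows "finite {x\<in>\<Lambda>. n-1 < dist c x \<and> dist c x \<le> n} \<and>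
    real (card {x\<in>\<Lambda>. n-1 < dist c x \<and> dist c x \<le> n}) \<le> real D0 + KS * n^(CARD('n)-1)"
proof -
  let ?S = "{x\<in>L. n-1 < dist c x \<and> dist c x \<le> n}"
  have sub: "{x\<in>\<Lambda>. n-1 < dist c x \<and> dist c x \<le> n} \<subseteq> (\<Lambda> \<inter> ball 0 RR) \<union> ?S"
    using far_L by (auto simp: dist_0_norm not_less)
  have f: "finite ?S" and cL: "real (card ?S) \<le> KS * n^(CARD('n)-1)" using L_shell[OF assms, of c] by auto
  have fin: "finite ((\<Lambda> \<inter> ball 0 RR) \<union> ?S)" using f RR(3) by simp
  have "card {x\<in>\<Lambda>. n-1 < dist c x \<and> dist c x \<le> n} \<le> card ((\<Lambda> \<inter> ball 0 RR) \<union> ?S)"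
    by (rule card_mono[OF fin sub])
  also have "\<dots> \<le> D0 + card ?S" unfolding D0_def by (rule card_Un_le)
  finally show ?thesis using cL finite_subset[OF sub fin] by simp
qed

definition "r1 = 2*RR + 3*hh"

lemma r1_nonneg: "0 \<le> r1" using RR(1) hh_nonneg by (simp add: r1_def)

lemma Lam_dense: "\<exists>y\<in>\<Lambda>. dist x y \<le> r1"
proof (cases "RR + hh \<le> norm x")
  case True
  obtain y where y: "y \<in> L" "dist x y \<le> hh" using L_dense by blast
  have "norm x \<le> norm y + dist x y" by (metis dist_norm norm_triangle_sub)
  then have "RR \<le> norm y" using True y by linarith
  then show ?thesis using y far_Lam RR(1) hh_nonneg by (auto simp: r1_def intro!: bexI[of _ y])
next
  case False
  obtain i :: 'n where True by simp
  define x' :: "real^'n" where "x' = (RR + hh) *\<^sub>R axis i 1"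
  have nx': "norm x' = RR + hh" using RR(1) hh_nonneg by (simp add: x'_def)
  obtain y where y: "y \<in> L" "dist x' y \<le> hh" using L_dense by blast
  have "norm x' \<le> norm y + dist x' y" by (metis dist_norm norm_triangle_sub)
  then have "RR \<le> norm y" using nx' y by linarith
  then have yL: "y \<in> \<Lambda>" using far_Lam y by auto
  have "dist x y \<le> dist x x' + dist x' y" by (rule dist_triangle)
  also have "dist x x' \<le> norm x + norm x'" by (simp add: dist_norm norm_triangle_ineq4)
  finally have "dist x y \<le> r1" using False nx' y by (simp add: r1_def)
  then show ?thesis using yL by blast
qed

lemma Lam_sep: obtains \<delta> where "\<delta> > 0" "\<And>x y. x \<in> \<Lambda> \<Longrightarrow> y \<in> \<Lambda> \<Longrightarrow> x \<noteq> y \<Longrightarrow> \<delta> \<le> dist x y"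
proof -
  define F where "F = \<Lambda> \<inter> cball 0 (RR+1)"
  have fF: "finite F" using Lam_cball[of "RR+1" 0] RR(1) by (simp add: F_def)
  define DS where "DS = (\<lambda>(p,q). dist p q) ` {pq\<in>F\<times>F. fst pq \<noteq> snd pq} \<union> {1}"
  have fDS: "finite DS" using fF by (simp add: DS_def)
  have DSpos: "\<forall>v\<in>DS. v > 0" by (auto simp: DS_def)
  have DSne: "DS \<noteq> {}" by (simp add: DS_def)
  define \<delta>0 where "\<delta>0 = Min DS"
  have "\<delta>0 \<in> DS" unfolding \<delta>0_def using fDS DSne by (rule Min_in)
  then have d0: "\<delta>0 > 0" using DSpos by blast
  have d0le: "\<delta>0 \<le> dist p q" if "p \<in> F" "q \<in> F" "p \<noteq> q" for p q
  proof -
    have "(p,q) \<in> {pq\<in>F\<times>F. fst pq \<noteq> snd pq}" using that by simp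
    then have "(\<lambda>(p,q). dist p q) (p,q) \<in> DS" unfolding DS_def by (rule UnI1[OF imageI])
    then show ?thesis using fDS unfolding \<delta>0_def by (simp add: Min_le)
  qed
  have d01: "\<delta>0 \<le> 1" using fDS unfolding \<delta>0_def DS_def by (simp add: Min_le)
  define \<delta> where "\<delta> = min (1/BB) \<delta>0"
  show ?thesis
  proof (rule that[of \<delta>])
    show "\<delta> > 0" using d0 BB(1) by (simp add: \<delta>_def)
    fix x y assume xy: "x \<in> \<Lambda>" "y \<in> \<Lambda>" "x \<noteq> y"
    show "\<delta> \<le> dist x y"
    proof (cases "RR \<le> norm x \<and> RR \<le> norm y")
      case True
      then have "1/BB \<le> dist x y" using far_L xy L_sep by blast
      then show ?thesis by (simp add: \<delta>_def)
    next
      case False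
      show ?thesis
      proof (cases "dist x y < 1")
        case True
        have "norm x \<le> norm y + dist x y" "norm y \<le> norm x + dist x y"
          using norm_triangle_sub[of x y] norm_triangle_sub[of y x] by (simp_all add: dist_norm norm_minus_commute)
        then have "x \<in> F" "y \<in> F" using False True xy by (auto simp: F_def)
        then show ?thesis using d0le xy by (simp add: \<delta>_def min.coboundedI2)
      next
        case False then show ?thesis using d01 by (simp add: \<delta>_def min.coboundedI2)
      qed
    qed
  qed
qed

end

context latL begin
lemma descent:
  assumes l: "l \<in> \<Lambda>" and t: "t \<in> \<Lambda>" and lt: "l \<noteq> t"
  shows "\<exists>m\<in>vor_nbrs \<Lambda> l. dist m t < dist l t"
proof -
  define u where "u = t - l"
  define F where "F = {k\<in>\<Lambda>. 0 < u \<bullet> (k-l) \<and> (norm (k-l))^2 \<le> u \<bullet> (k-l)}"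
  have Fsub: "F \<subseteq> \<Lambda> \<inter> cball l (norm u)"
  proof
    fix k assume k: "k \<in> F"
    have cs: "u \<bullet> (k-l) \<le> norm u * norm (k-l)" by (rule norm_cauchy_schwarz)
    have "norm (k-l) * norm (k-l) \<le> norm u * norm (k-l)"
      using k cs unfolding F_def power2_eq_square by simp
    then have "norm (k-l) \<le> norm u"
      by (cases "norm (k-l) = 0") (auto intro: mult_right_le_imp_le)
    then show "k \<in> \<Lambda> \<inter> cball l (norm u)" using k by (simp add: F_def dist_norm norm_minus_commute)
  qed
  have "finite (\<Lambda> \<inter> cball l (norm u))" using Lam_cball[of "norm u" l] by simp
  then have fF: "finite F" using Fsub finite_subset by blast
  have uu: "0 < u \<bullet> u" using lt by (simp add: u_def)
  have tF: "t \<in> F" using t uu by (simp add: F_def u_def power2_norm_eq_inner)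
  define s where "s k = (norm (k-l))^2 / (2 * (u \<bullet> (k-l)))" for k
  obtain m where mF: "m \<in> F" and mmin: "\<And>k. k \<in> F \<Longrightarrow> s m \<le> s k"
  proof -
    have "s ` F \<noteq> {}" using tF by auto
    then have "Min (s ` F) \<in> s ` F" using fF by simp
    then obtain m where "m \<in> F" "s m = Min (s ` F)" by auto
    then show ?thesis using that fF by simp
  qed
  have st: "s t = 1/2" using uu by (simp add: s_def u_def power2_norm_eq_inner)
  have sm: "s m \<le> 1/2" using mmin[OF tF] st by simp
  have um: "0 < u \<bullet> (m-l)" and nm: "(norm (m-l))^2 \<le> u \<bullet> (m-l)" using mF by (auto simp: F_def)
  have sm0: "0 \<le> s m" using um by (simp add: s_def)
  define a where "a = l + s m *\<^sub>R u"
  have key: "(dist a k)^2 - (dist a l)^2 = (norm (k-l))^2 - 2 * s m * (u \<bullet> (k-l))" for k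
    using sq_id[of l "s m" u k] by (simp add: a_def dist_norm)
  have eqm: "dist a l = dist a m"
  proof -
    have "2 * s m * (u \<bullet> (m-l)) = (norm (m-l))^2" using um by (simp add: s_def)
    then have "(dist a m)^2 = (dist a l)^2" using key[of m] by simp
    then show ?thesis by (simp add: power2_eq_iff_nonneg)
  qed
  have lek: "dist a l \<le> dist a k" if k: "k \<in> \<Lambda>" for k
  proof -
    have "0 \<le> (norm (k-l))^2 - 2 * s m * (u \<bullet> (k-l))"
    proof (cases "0 < u \<bullet> (k-l)")
      case False
      then have "2 * s m * (u \<bullet> (k-l)) \<le> 0" using sm0 by (simp add: mult_nonneg_nonpos)
      then show ?thesis using zero_le_power2[of "norm (k-l)"] by linarith
    next
      case pos: True
      show ?thesis
      proof (cases "k \<in> F")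
        case True
        then have "s m \<le> s k" by (rule mmin)
        then have "2 * s m * (u \<bullet> (k-l)) \<le> 2 * s k * (u \<bullet> (k-l))" using pos by simp
        also have "\<dots> = (norm (k-l))^2" using pos by (simp add: s_def)
        finally show ?thesis by simp
      next
        case False
        then have "u \<bullet> (k-l) < (norm (k-l))^2" using k pos by (auto simp: F_def)
        moreover have "(2 * s m) * (u \<bullet> (k-l)) \<le> 1 * (u \<bullet> (k-l))"
          by (rule mult_right_mono) (use sm pos in auto)
        ultimately show ?thesis by simp
      qed
    qed
    then have "(dist a l)^2 \<le> (dist a k)^2" using key[of k] by linarith
    then show ?thesis by (rule power2_le_imp_le) simp
  qed
  have ml: "m \<noteq> l" using um by auto
  have mL: "m \<in> \<Lambda>" using mF by (simp add: F_def)
  have "m \<in> vor_nbrs \<Lambda> l" unfolding vor_nbrs_def using mL ml eqm lek by blast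
  moreover have "dist m t < dist l t"
  proof -
    have "(norm (m - t))^2 = (norm (m-l))^2 - 2 * (u \<bullet> (m-l)) + (norm u)^2"
      using sq_id2[of m t l] by (simp add: u_def)
    also have "\<dots> < (norm u)^2" using um nm by simp
    finally have "(norm (m - t))^2 < (norm u)^2" .
    then have "norm (m-t) < norm u" by (simp add: power2_less_imp_less)
    then show ?thesis by (simp add: dist_norm u_def norm_minus_commute)
  qed
  ultimately show ?thesis by blast
qed

end


lemma concat_path:
  assumes "chain S p" "chain S q" "last p = hd q"
  shows "chain S (p @ tl q) \<and> hd (p @ tl q) = hd p \<and> last (p @ tl q) = last q \<and>
         length (p @ tl q) - 1 = (length p - 1) + (length q - 1)"
proof -
  have ne: "p \<noteq> []" "q \<noteq> []" using assms by (auto simp: chain_def)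
  have "last (p @ tl q) = last q"
  proof (cases "tl q = []")
    case True then have "q = [hd q]" using ne by (metis list.collapse)
    then show ?thesis using True assms(3) ne by (metis append_Nil2 last.simps)
  next
    case False then show ?thesis using ne by (metis last_appendR last_tl)
  qed
  moreover have "length (p @ tl q) - 1 = (length p - 1) + (length q - 1)"
    using ne by (cases p; cases q) auto
  ultimately show ?thesis using chain_append[OF assms] ne by simp
qed

context latL begin

lemma HB_nonneg: "0 \<le> r \<Longrightarrow> 0 \<le> HB r" using ee_pos by (simp add: HB_def)
lemma HB_mono: "0 \<le> r \<Longrightarrow> r \<le> r' \<Longrightarrow> HB r \<le> HB r'"
  unfolding HB_def using ee_pos by (intro add_left_mono power_mono divide_right_mono) auto

lemma hop:
  assumes t: "t \<in> \<Lambda>"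
  shows "l \<in> \<Lambda> \<Longrightarrow> \<exists>p. chain \<Lambda> p \<and> hd p = l \<and> last p = t \<and> length p - 1 \<le> card {k\<in>\<Lambda>. dist k t < dist l t}"
proof (induction "card {k\<in>\<Lambda>. dist k t < dist l t}" arbitrary: l rule: less_induct)
  case less
  show ?case
  proof (cases "l = t")
    case True
    then show ?thesis using t by (intro exI[of _ "[t]"]) (simp add: chain_single)
  next
    case False
    obtain m where m: "m \<in> vor_nbrs \<Lambda> l" "dist m t < dist l t" using descent[OF less.prems t False] by blast
    have mL: "m \<in> \<Lambda>" using m(1) by (simp add: vor_nbrs_def)
    have "{k\<in>\<Lambda>. dist k t < dist l t} \<subseteq> \<Lambda> \<inter> cball t (dist l t)" by (auto simp: dist_commute)
    moreover have "finite (\<Lambda> \<inter> cball t (dist l t))" using Lam_cball[of "dist l t" t] by simp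
    ultimately have finX: "finite {k\<in>\<Lambda>. dist k t < dist l t}" by (rule finite_subset)
    have "{k\<in>\<Lambda>. dist k t < dist m t} \<subset> {k\<in>\<Lambda>. dist k t < dist l t}"
      using m(2) mL by auto
    then have lt: "card {k\<in>\<Lambda>. dist k t < dist m t} < card {k\<in>\<Lambda>. dist k t < dist l t}"
      by (rule psubset_card_mono[OF finX])
    obtain q where q: "chain \<Lambda> q" "hd q = m" "last q = t" "length q - 1 \<le> card {k\<in>\<Lambda>. dist k t < dist m t}"
      using less.hyps[OF lt mL] by blast
    have qne: "q \<noteq> []" using q(1) by (simp add: chain_def)
    have "chain \<Lambda> (l # q)" using chain_Cons[OF less.prems q(1)] q(2) m(1) by simp
    moreover have "last (l # q) = t" using q(3) qne by simp
    moreover have "length (l # q) - 1 \<le> card {k\<in>\<Lambda>. dist k t < dist l t}" using q(4) lt qne by (cases q) auto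
    ultimately show ?thesis by (intro exI[of _ "l # q"]) simp
  qed
qed

lemma hop_bound:
  assumes "l \<in> \<Lambda>" "t \<in> \<Lambda>" "dist l t \<le> r"
  shows "\<exists>p. chain \<Lambda> p \<and> hd p = l \<and> last p = t \<and> real (length p - 1) \<le> HB r"
proof -
  obtain p where p: "chain \<Lambda> p" "hd p = l" "last p = t" "length p - 1 \<le> card {k\<in>\<Lambda>. dist k t < dist l t}"
    using hop[OF assms(2,1)] by blast
  have r: "0 \<le> r" using assms(3) zero_le_dist order.trans by blast
  have sub: "{k\<in>\<Lambda>. dist k t < dist l t} \<subseteq> \<Lambda> \<inter> cball t r" using assms(3) by (auto simp: dist_commute)
  have "card {k\<in>\<Lambda>. dist k t < dist l t} \<le> card (\<Lambda> \<inter> cball t r)"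
    using Lam_cball[OF r, of t] by (intro card_mono[OF _ sub]) simp
  then have "real (length p - 1) \<le> real (card (\<Lambda> \<inter> cball t r))" using p(4) by linarith
  also have "\<dots> \<le> HB r" using Lam_cball[OF r, of t] by simp
  finally show ?thesis using p by blast
qed

lemma lin_k:
  "\<forall>l1\<in>\<Lambda>. \<forall>l2\<in>\<Lambda>. dist l1 l2 \<le> real k + r1 \<longrightarrow>
     (\<exists>p. chain \<Lambda> p \<and> hd p = l1 \<and> last p = l2 \<and> real (length p - 1) \<le> real (k+1) * HB (1 + 2*r1))"
proof (induction k)
  case 0
  show ?case
  proof (intro ballI impI)
    fix l1 l2 assume l: "l1 \<in> \<Lambda>" "l2 \<in> \<Lambda>" "dist l1 l2 \<le> real 0 + r1"
    obtain p where p: "chain \<Lambda> p" "hd p = l1" "last p = l2" "real (length p - 1) \<le> HB r1"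
      using hop_bound[OF l(1,2)] l(3) by auto
    have "HB r1 \<le> HB (1 + 2*r1)" using r1_nonneg by (intro HB_mono) auto
    then show "\<exists>p. chain \<Lambda> p \<and> hd p = l1 \<and> last p = l2 \<and> real (length p - 1) \<le> real (0+1) * HB (1 + 2*r1)"
      using p by auto
  qed
next
  case (Suc k)
  have HB0: "0 \<le> HB (1 + 2*r1)" using r1_nonneg by (intro HB_nonneg) auto
  show ?case
  proof (intro ballI impI)
    fix l1 l2 assume l: "l1 \<in> \<Lambda>" "l2 \<in> \<Lambda>" "dist l1 l2 \<le> real (Suc k) + r1"
    show "\<exists>p. chain \<Lambda> p \<and> hd p = l1 \<and> last p = l2 \<and> real (length p - 1) \<le> real (Suc k + 1) * HB (1 + 2*r1)"
    proof (cases "dist l1 l2 \<le> real k + r1")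
      case True
      then obtain p where p: "chain \<Lambda> p" "hd p = l1" "last p = l2" "real (length p - 1) \<le> real (k+1) * HB (1 + 2*r1)"
        using Suc.IH l by blast
      have "real (k+1) * HB (1 + 2*r1) \<le> real (Suc k + 1) * HB (1 + 2*r1)"
        using HB0 by (intro mult_right_mono) auto
      then show ?thesis using p by (intro exI[of _ p]) auto
    next
      case False
      define D where "D = dist l1 l2"
      have Dk: "real k < D" using False r1_nonneg by (simp add: D_def)
      then have Dpos: "0 < D" by (smt (verit) of_nat_0_le_iff)
      define x where "x = l2 + (real k / D) *\<^sub>R (l1 - l2)"
      have nl: "norm (l1 - l2) = D" by (simp add: D_def dist_norm)
      have dx2: "dist x l2 = real k" using Dpos by (simp add: x_def dist_norm nl)
      have "l1 - x = (1 - real k / D) *\<^sub>R (l1 - l2)" by (simp add: x_def algebra_simps)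
      moreover have "0 \<le> 1 - real k / D" using Dk Dpos by simp
      ultimately have "dist l1 x = (1 - real k / D) * D" by (simp add: dist_norm nl)
      also have "\<dots> = D - real k" using Dpos by (simp add: algebra_simps)
      finally have d1x: "dist l1 x = D - real k" .
      obtain w where w: "w \<in> \<Lambda>" "dist x w \<le> r1" using Lam_dense by blast
      have "dist w l2 \<le> dist w x + dist x l2" by (rule dist_triangle)
      then have "dist w l2 \<le> real k + r1" using w dx2 by (simp add: dist_commute)
      then obtain q where q: "chain \<Lambda> q" "hd q = w" "last q = l2" "real (length q - 1) \<le> real (k+1) * HB (1 + 2*r1)"
        using Suc.IH w l by blast
      have "dist l1 w \<le> dist l1 x + dist x w" by (rule dist_triangle)
      then have "dist l1 w \<le> 1 + 2*r1" using d1x w l(3) by (simp add: D_def)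
      then obtain p where p: "chain \<Lambda> p" "hd p = l1" "last p = w" "real (length p - 1) \<le> HB (1 + 2*r1)"
        using hop_bound[OF l(1) w(1)] by blast
      have c: "chain \<Lambda> (p @ tl q) \<and> hd (p @ tl q) = hd p \<and> last (p @ tl q) = last q \<and>
         length (p @ tl q) - 1 = (length p - 1) + (length q - 1)"
        using concat_path[OF p(1) q(1)] p(3) q(2) by simp
      have "real (length (p @ tl q) - 1) \<le> HB (1 + 2*r1) + real (k+1) * HB (1 + 2*r1)"
        using c p(4) q(4) by simp
      also have "\<dots> = real (Suc k + 1) * HB (1 + 2*r1)" by (simp add: algebra_simps)
      finally show ?thesis using c p q by (intro exI[of _ "p @ tl q"]) auto
    qed
  qed
qed

lemma lin_path: obtains Cp where "Cp > 0" "\<And>l1 l2. l1 \<in> \<Lambda> \<Longrightarrow> l2 \<in> \<Lambda> \<Longrightarrow>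
   \<exists>p. chain \<Lambda> p \<and> hd p = l1 \<and> last p = l2 \<and> real (length p - 1) \<le> Cp * dist l1 l2"
proof -
  obtain \<delta> where d: "\<delta> > 0" "\<And>x y. x \<in> \<Lambda> \<Longrightarrow> y \<in> \<Lambda> \<Longrightarrow> x \<noteq> y \<Longrightarrow> \<delta> \<le> dist x y"
    using Lam_sep by blast
  define H where "H = HB (1 + 2*r1)"
  have H0: "0 \<le> H" unfolding H_def using r1_nonneg by (intro HB_nonneg) auto
  define Cp where "Cp = (1 + 2/\<delta>) * H + 1"
  show ?thesis
  proof (rule that[of Cp])
    show "Cp > 0" using H0 d(1) by (simp add: Cp_def add_nonneg_pos)
    fix l1 l2 assume l: "l1 \<in> \<Lambda>" "l2 \<in> \<Lambda>"
    show "\<exists>p. chain \<Lambda> p \<and> hd p = l1 \<and> last p = l2 \<and> real (length p - 1) \<le> Cp * dist l1 l2"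
    proof (cases "l1 = l2")
      case True then show ?thesis using l by (intro exI[of _ "[l1]"]) (simp add: chain_single)
    next
      case False
      define D where "D = dist l1 l2"
      have Dd: "\<delta> \<le> D" using d(2)[OF l False] by (simp add: D_def)
      define k where "k = nat \<lceil>D\<rceil>"
      have D0: "0 \<le> D" by (simp add: D_def)
      have rk: "real k = of_int \<lceil>D\<rceil>" using D0 by (simp add: k_def)
      have k1: "D \<le> real k" "real k \<le> D + 1" unfolding rk by (simp_all add: le_of_int_ceiling of_int_ceiling_le_add_one)
      obtain p where p: "chain \<Lambda> p" "hd p = l1" "last p = l2" "real (length p - 1) \<le> real (k+1) * H"
        using lin_k[of k] l k1 r1_nonneg unfolding H_def D_def by fastforce
      have "real (k+1) * H \<le> (D + 2) * H" using k1 H0 by (intro mult_right_mono) auto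
      also have "\<dots> \<le> (D + 2 * (D/\<delta>)) * H"
      proof -
        have "1 \<le> D / \<delta>" using Dd d(1) by simp
        then show ?thesis using H0 by (intro mult_right_mono) auto
      qed
      also have "\<dots> = D * ((1 + 2/\<delta>) * H)" by (simp add: algebra_simps)
      also have "\<dots> \<le> D * Cp" using Dd d(1) by (simp add: Cp_def)
      finally show ?thesis using p by (intro exI[of _ p]) (simp add: D_def mult.commute)
    qed
  qed
qed

end


lemma mid_eq: fixes a l m k :: "'a::real_inner"
  shows "2 * ((norm ((1/2) *\<^sub>R (l + m) - k))^2 - (norm ((1/2) *\<^sub>R (l + m) - l))^2) =
     ((norm (a - k))^2 - (norm (a - l))^2) + ((norm (a - (l + m - k)))^2 - (norm (a - m))^2)"
  unfolding power2_norm_eq_inner by (simp add: inner_add_left inner_add_right inner_diff_left inner_diff_right inner_commute algebra_simps power2_eq_square)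

context lat begin

definition lstep :: "real^'n \<Rightarrow> real^'n \<Rightarrow> bool" where
  "lstep y y' \<longleftrightarrow> (\<exists>i. y' = y + A *v axis i 1 \<or> y' = y - A *v axis i 1)"

lemma norm_ax_le: "norm (A *v axis i (1::real)) \<le> hh"
  unfolding hh_def by (rule member_le_sum) auto

lemma gamma_Zs:
  "\<forall>z\<in>Zs. (\<Sum>i\<in>UNIV. \<bar>z$i\<bar>) = real N \<longrightarrow>
     (\<exists>ys. ys \<noteq> [] \<and> hd ys = 0 \<and> last ys = A *v z \<and> set ys \<subseteq> L \<and>
        (\<forall>j. Suc j < length ys \<longrightarrow> lstep (ys!j) (ys!Suc j)) \<and> length ys = N + 1)"
proof (induction N)
  case 0
  show ?case
  proof (intro ballI impI)
    fix z :: "real^'n" assume z: "z \<in> Zs" "(\<Sum>i\<in>UNIV. \<bar>z$i\<bar>) = real 0"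
    then have "\<forall>i\<in>UNIV. \<bar>z$i\<bar> = 0" by (subst sum_nonneg_eq_0_iff[symmetric]) auto
    then have "z = 0" by (simp add: vec_eq_iff)
    then show "\<exists>ys. ys \<noteq> [] \<and> hd ys = 0 \<and> last ys = A *v z \<and> set ys \<subseteq> L \<and>
        (\<forall>j. Suc j < length ys \<longrightarrow> lstep (ys!j) (ys!Suc j)) \<and> length ys = 0 + 1"
      using L_0 by (intro exI[of _ "[0]"]) auto
  qed
next
  case (Suc N)
  show ?case
  proof (intro ballI impI)
    fix z :: "real^'n" assume z: "z \<in> Zs" "(\<Sum>i\<in>UNIV. \<bar>z$i\<bar>) = real (Suc N)"
    have "z \<noteq> 0" using z(2) by auto
    then obtain i where zi: "z$i \<noteq> 0" by (metis vec_eq_iff zero_index)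
    obtain k where k: "z$i = of_int k" using z(1) by (auto simp: Zs_def elim: Ints_cases)
    define \<sigma> :: real where "\<sigma> = sgn (z$i)"
    have \<sigma>: "\<sigma> = 1 \<or> \<sigma> = -1" using zi by (simp add: \<sigma>_def sgn_real_def)
    define z' where "z' = z - \<sigma> *\<^sub>R axis i 1"
    have z'Z: "z' \<in> Zs" using z(1) \<sigma> by (auto simp: z'_def Zs_def axis_def)
    have abs_i: "\<bar>z'$i\<bar> = \<bar>z$i\<bar> - 1"
    proof -
      have "1 \<le> \<bar>z$i\<bar>" using zi k by auto
      then show ?thesis using \<sigma> by (auto simp: z'_def \<sigma>_def sgn_real_def)
    qed
    have abs_j: "\<bar>z'$j\<bar> = \<bar>z$j\<bar> - (if j = i then 1 else 0)" for j
      using abs_i by (cases "j = i") (auto simp: z'_def axis_def)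
    have "(\<Sum>j\<in>UNIV. \<bar>z'$j\<bar>) = (\<Sum>j\<in>UNIV. \<bar>z$j\<bar>) - (\<Sum>j\<in>UNIV. (if j = i then 1 else 0))"
      by (simp add: abs_j sum_subtractf)
    also have "\<dots> = real N" using z(2) by simp
    finally obtain ys where ys: "ys \<noteq> []" "hd ys = 0" "last ys = A *v z'" "set ys \<subseteq> L"
        "\<forall>j. Suc j < length ys \<longrightarrow> lstep (ys!j) (ys!Suc j)" "length ys = N + 1"
      using Suc.IH z'Z by blast
    have Az: "A *v z = A *v z' + \<sigma> *\<^sub>R (A *v axis i 1)"
      by (simp add: z'_def matrix_vector_mult_diff_distrib matrix_vector_mult_scaleR)
    have st: "lstep (A *v z') (A *v z)"
      using \<sigma> Az unfolding lstep_def by (auto intro!: exI[of _ i])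
    have AzL: "A *v z \<in> L" using z(1) by (auto simp: L_eq)
    define ys2 where "ys2 = ys @ [A *v z]"
    have "\<forall>j. Suc j < length ys2 \<longrightarrow> lstep (ys2!j) (ys2!Suc j)"
    proof (intro allI impI)
      fix j assume j: "Suc j < length ys2"
      show "lstep (ys2!j) (ys2!Suc j)"
      proof (cases "Suc j < length ys")
        case True then show ?thesis using ys(5) by (simp add: ys2_def nth_append)
      next
        case False
        then have "Suc j = length ys" using j by (simp add: ys2_def)
        then have jj: "j = length ys - 1" by simp
        have "ys2!j = last ys" "ys2!Suc j = A *v z" using ys(1) \<open>Suc j = length ys\<close>
          by (auto simp: ys2_def nth_append last_conv_nth jj)
        then show ?thesis using st ys(3) by simp
      qed
    qed
    then show "\<exists>ys. ys \<noteq> [] \<and> hd ys = 0 \<and> last ys = A *v z \<and> set ys \<subseteq> L \<and>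
        (\<forall>j. Suc j < length ys \<longrightarrow> lstep (ys!j) (ys!Suc j)) \<and> length ys = Suc N + 1"
      using ys AzL by (intro exI[of _ ys2]) (auto simp: ys2_def)
  qed
qed

lemma gamma_L:
  assumes "v \<in> L"
  shows "\<exists>ys. ys \<noteq> [] \<and> hd ys = 0 \<and> last ys = v \<and> set ys \<subseteq> L \<and>
        (\<forall>j. Suc j < length ys \<longrightarrow> lstep (ys!j) (ys!Suc j)) \<and>
        real (length ys - 1) \<le> real CARD('n) * BB * norm v"
proof -
  obtain z where z: "z \<in> Zs" "v = A *v z" using assms by (auto simp: L_eq)
  define S where "S = (\<Sum>i\<in>UNIV. \<bar>z$i\<bar>)"
  have "S \<in> \<int>" using z(1) unfolding S_def Zs_def by (intro Ints_sum) auto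
  then obtain m where m: "S = of_int m" by (auto elim: Ints_cases)
  have "0 \<le> S" by (simp add: S_def sum_nonneg)
  then have S: "S = real (nat m)" using m by simp
  obtain ys where ys: "ys \<noteq> [] \<and> hd ys = 0 \<and> last ys = A *v z \<and> set ys \<subseteq> L \<and>
        (\<forall>j. Suc j < length ys \<longrightarrow> lstep (ys!j) (ys!Suc j)) \<and> length ys = nat m + 1"
    using gamma_Zs[of "nat m"] z(1) S unfolding S_def by blast
  have "S \<le> (\<Sum>i\<in>(UNIV::'n set). norm z)" unfolding S_def by (intro sum_mono component_le_norm_cart)
  also have "\<dots> = real CARD('n) * norm z" by simp
  also have "\<dots> \<le> real CARD('n) * (BB * norm (A *v z))" by (intro mult_left_mono BB) auto
  finally have "real (length ys - 1) \<le> real CARD('n) * BB * norm v" using ys S z(2) by (simp add: mult.assoc)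
  then show ?thesis using ys z(2) by blast
qed

end

context latL begin

lemma lat_step:
  assumes lL: "l \<in> L" and nl: "RR + hh \<le> norm l" and e: "e = A *v axis i 1 \<or> e = - (A *v axis i 1)"
    and nm: "RR \<le> norm (l + e)"
  shows "l + e \<in> vor_nbrs \<Lambda> l"
proof -
  define m where "m = l + e"
  have "m \<in> vor_nbrs L l" using vor[of l i] lL e unfolding L_def m_def by auto
  then obtain a where mL: "m \<in> L" "m \<noteq> l" and a: "dist a l = dist a m" "\<And>k. k \<in> L \<Longrightarrow> dist a l \<le> dist a k"
    unfolding vor_nbrs_def by blast
  have ne: "norm e \<le> hh" using e norm_ax_le[of i] by auto
  define c where "c = (1/2) *\<^sub>R (l + m)"
  have cl: "c - l = (1/2) *\<^sub>R e" by (simp add: c_def m_def vec_eq_iff field_simps)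
  have cm: "c - m = - ((1/2) *\<^sub>R e)" by (simp add: c_def m_def vec_eq_iff field_simps)
  have dcl: "dist c l = norm e / 2" by (simp add: dist_norm cl)
  have eq: "dist c l = dist c m" by (simp add: dist_norm cl cm)
  have le: "dist c l \<le> dist c k" if k: "k \<in> \<Lambda>" for k
  proof (cases "RR \<le> norm k")
    case True
    then have kL: "k \<in> L" using far_L k by blast
    have k'L: "l + m - k \<in> L" using L_add[OF lL mL(1)] L_diff kL by blast
    have "(norm (a - l))^2 \<le> (norm (a - k))^2" using a(2)[OF kL] by (simp add: dist_norm power_mono)
    moreover have "(norm (a - m))^2 \<le> (norm (a - (l + m - k)))^2"
      using a(2)[OF k'L] a(1) by (simp add: dist_norm power_mono)
    moreover note mid_eq[of l m k a]
    ultimately have "0 \<le> (norm ((1/2) *\<^sub>R (l + m) - k))^2 - (norm ((1/2) *\<^sub>R (l + m) - l))^2"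
      by (smt (verit))
    then have "(dist c l)^2 \<le> (dist c k)^2" by (simp add: c_def dist_norm)
    then show ?thesis by (rule power2_le_imp_le) simp
  next
    case False
    have "norm l \<le> norm c + norm (c - l)" using norm_triangle_sub[of l c] by (simp add: norm_minus_commute)
    then have nc: "norm l - norm e / 2 \<le> norm c" by (simp add: cl)
    have "norm c \<le> norm k + dist c k" using norm_triangle_sub[of c k] by (simp add: dist_norm)
    then have "dist c k \<ge> norm e / 2" using nc nl False ne by linarith
    then show ?thesis using dcl by simp
  qed
  have "RR \<le> norm m" using nm by (simp add: m_def)
  then have mLam: "m \<in> \<Lambda>" using far_Lam mL(1) by blast
  show ?thesis unfolding vor_nbrs_def using mLam mL(2) eq le by (auto simp: m_def)
qed

end


lemma nn_path_iff: "nn_path S C l1 l2 p \<longleftrightarrow> chain S p \<and> hd p = l1 \<and> last p = l2 \<and> real (length p - 1) \<le> C * dist l1 l2"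
  by (auto simp: nn_path_def chain_def)

context latL begin

definition "R2 = RR + hh"

definition "Gam v = (SOME ys. ys \<noteq> [] \<and> hd ys = 0 \<and> last ys = v \<and> set ys \<subseteq> L \<and>
        (\<forall>j. Suc j < length ys \<longrightarrow> lstep (ys!j) (ys!Suc j)) \<and>
        real (length ys - 1) \<le> real CARD('n) * BB * norm v)"

lemma Gam: "v \<in> L \<Longrightarrow> Gam v \<noteq> [] \<and> hd (Gam v) = 0 \<and> last (Gam v) = v \<and> set (Gam v) \<subseteq> L \<and>
        (\<forall>j. Suc j < length (Gam v) \<longrightarrow> lstep (Gam v!j) (Gam v!Suc j)) \<and>
        real (length (Gam v) - 1) \<le> real CARD('n) * BB * norm v"
  unfolding Gam_def by (rule someI_ex[OF gamma_L])

definition "good l1 l2 \<longleftrightarrow> l1 \<in> L \<and> l2 \<in> L \<and> (\<forall>y\<in>set (Gam (l2 - l1)). R2 \<le> norm (l1 + y))"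

lemma good_path:
  assumes g: "good l1 l2"
  shows "chain \<Lambda> (map ((+) l1) (Gam (l2 - l1))) \<and> hd (map ((+) l1) (Gam (l2 - l1))) = l1 \<and>
         last (map ((+) l1) (Gam (l2 - l1))) = l2 \<and>
         real (length (map ((+) l1) (Gam (l2 - l1))) - 1) \<le> real CARD('n) * BB * dist l1 l2"
proof -
  define v where "v = l2 - l1"
  define ys where "ys = Gam v"
  define p where "p = map ((+) l1) ys"
  have l1L: "l1 \<in> L" and l2L: "l2 \<in> L" and far: "\<And>y. y \<in> set ys \<Longrightarrow> R2 \<le> norm (l1 + y)"
    using g by (auto simp: good_def ys_def v_def)
  have vL: "v \<in> L" using L_diff[OF l2L l1L] by (simp add: v_def)
  note G = Gam[OF vL, folded ys_def]
  have RR2: "RR \<le> R2" using hh_nonneg by (simp add: R2_def)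
  have pne: "p \<noteq> []" using G by (simp add: p_def)
  have setp: "set p \<subseteq> \<Lambda>"
  proof
    fix x assume "x \<in> set p"
    then obtain y where y: "y \<in> set ys" "x = l1 + y" by (auto simp: p_def)
    have "x \<in> L" using y G L_add[OF l1L] by auto
    moreover have "RR \<le> norm x" using far[OF y(1)] y(2) RR2 by simp
    ultimately show "x \<in> \<Lambda>" by (rule far_Lam)
  qed
  have steps: "p ! Suc j \<in> vor_nbrs \<Lambda> (p ! j)" if j: "Suc j < length p" for j
  proof -
    have j': "Suc j < length ys" "j < length ys" using j by (auto simp: p_def)
    have pj: "p ! j = l1 + ys ! j" "p ! Suc j = l1 + ys ! Suc j" using j' by (auto simp: p_def)
    obtain i where i: "ys!Suc j = ys!j + A *v axis i 1 \<or> ys!Suc j = ys!j - A *v axis i 1"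
      using G j'(1) unfolding lstep_def by blast
    define e where "e = ys!Suc j - ys!j"
    have e: "e = A *v axis i 1 \<or> e = - (A *v axis i 1)" using i by (auto simp: e_def)
    have yj: "ys!j \<in> set ys" "ys!Suc j \<in> set ys" using j' by auto
    have lL: "l1 + ys!j \<in> L" using L_add[OF l1L] G yj by auto
    have "p ! Suc j = (l1 + ys!j) + e" using pj by (simp add: e_def)
    moreover have "(l1 + ys!j) + e \<in> vor_nbrs \<Lambda> (l1 + ys!j)"
    proof (rule lat_step[OF lL _ e])
      show "RR + hh \<le> norm (l1 + ys ! j)" using far[OF yj(1)] by (simp add: R2_def)
      have "R2 \<le> norm (l1 + ys!Suc j)" using far[OF yj(2)] .
      then show "RR \<le> norm (l1 + ys ! j + e)" using RR2 by (simp add: e_def)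
    qed
    ultimately show ?thesis using pj by (simp add: add.assoc)
  qed
  have "chain \<Lambda> p" unfolding chain_def using pne setp steps by blast
  moreover have "hd p = l1" using G by (simp add: p_def hd_map)
  moreover have "last p = l2" using G by (simp add: p_def last_map v_def)
  moreover have "real (length p - 1) \<le> real CARD('n) * BB * dist l1 l2"
    using G by (simp add: p_def v_def dist_norm norm_minus_commute)
  ultimately show ?thesis by (simp add: p_def ys_def v_def)
qed

end


context latL begin

definition "Cp1 = (SOME Cp. Cp > 0 \<and> (\<forall>l1 l2. l1 \<in> \<Lambda> \<longrightarrow> l2 \<in> \<Lambda> \<longrightarrow>
   (\<exists>p. chain \<Lambda> p \<and> hd p = l1 \<and> last p = l2 \<and> real (length p - 1) \<le> Cp * dist l1 l2)))"

lemma Cp1: "Cp1 > 0" "l1 \<in> \<Lambda> \<Longrightarrow> l2 \<in> \<Lambda> \<Longrightarrow>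
   \<exists>p. chain \<Lambda> p \<and> hd p = l1 \<and> last p = l2 \<and> real (length p - 1) \<le> Cp1 * dist l1 l2"
proof -
  have "\<exists>Cp. Cp > 0 \<and> (\<forall>l1 l2. l1 \<in> \<Lambda> \<longrightarrow> l2 \<in> \<Lambda> \<longrightarrow>
   (\<exists>p. chain \<Lambda> p \<and> hd p = l1 \<and> last p = l2 \<and> real (length p - 1) \<le> Cp * dist l1 l2))"
    using lin_path by metis
  from someI_ex[OF this] show "Cp1 > 0" "l1 \<in> \<Lambda> \<Longrightarrow> l2 \<in> \<Lambda> \<Longrightarrow>
   \<exists>p. chain \<Lambda> p \<and> hd p = l1 \<and> last p = l2 \<and> real (length p - 1) \<le> Cp1 * dist l1 l2"
    unfolding Cp1_def by blast+
qed

definition "Cpp = max Cp1 (real CARD('n) * BB)"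

lemma Cpp_pos: "Cpp > 0" using Cp1(1) by (simp add: Cpp_def)

definition "PP l1 l2 = (if good l1 l2 then map ((+) l1) (Gam (l2 - l1)) else (SOME p. nn_path \<Lambda> Cpp l1 l2 p))"

lemma PP_ok: assumes "l1 \<in> \<Lambda>" "l2 \<in> \<Lambda>" shows "nn_path \<Lambda> Cpp l1 l2 (PP l1 l2)"
proof (cases "good l1 l2")
  case True
  note gp = good_path[OF True]
  have "real CARD('n) * BB * dist l1 l2 \<le> Cpp * dist l1 l2"
    by (intro mult_right_mono) (auto simp: Cpp_def)
  then show ?thesis using gp True by (simp add: PP_def nn_path_iff)
next
  case False
  obtain p where p: "chain \<Lambda> p" "hd p = l1" "last p = l2" "real (length p - 1) \<le> Cp1 * dist l1 l2"
    using Cp1(2)[OF assms] by blast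
  have "Cp1 * dist l1 l2 \<le> Cpp * dist l1 l2" by (intro mult_right_mono) (auto simp: Cpp_def)
  then have "nn_path \<Lambda> Cpp l1 l2 p" using p by (simp add: nn_path_iff)
  then have "nn_path \<Lambda> Cpp l1 l2 (SOME p. nn_path \<Lambda> Cpp l1 l2 p)" by (rule someI)
  then show ?thesis using False by (simp add: PP_def)
qed

definition "MM = ((R2+ee)/ee)^CARD('n)"
definition "N2 = card (\<Lambda> \<inter> cball 0 R2)"
definition "CC = KS * (real CARD('n) * BB + 1) * (1 + MM) + 2 * real N2 * (real D0 + KS) + 1"

lemma R2_nonneg: "0 \<le> R2" using RR(1) hh_nonneg by (simp add: R2_def)

lemma count:
  assumes n1: "1 \<le> n"
  shows "finite (Bn \<Lambda> PP l n) \<and> real (card (Bn \<Lambda> PP l n)) \<le> CC * real n ^ CARD('n)"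
proof -
  define rn where "rn = real n"
  define d where "d = CARD('n)"
  have rn1: "1 \<le> rn" using n1 by (simp add: rn_def)
  have d1: "1 \<le> d" using card_n_pos by (simp add: d_def)
  define VL where "VL = {v\<in>L. rn-1 < dist 0 v \<and> dist 0 v \<le> rn}"
  have fVL: "finite VL" and cVL: "real (card VL) \<le> KS * rn^(d-1)"
    using L_shell[OF rn1, of 0] by (auto simp: VL_def d_def)
  define Sh where "Sh x = {y\<in>\<Lambda>. rn-1 < dist x y \<and> dist x y \<le> rn}" for x
  have fSh: "finite (Sh x)" and cSh: "real (card (Sh x)) \<le> real D0 + KS * rn^(d-1)" for x
    using Lam_shell[OF rn1, of x] by (auto simp: Sh_def d_def)
  define Small where "Small = \<Lambda> \<inter> cball 0 R2"
  have fSmall: "finite Small" using Lam_cball[OF R2_nonneg, of 0] by (simp add: Small_def)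
  define T where "T = real CARD('n) * BB * rn + 1"
  have lenG: "real (card (set (Gam v))) \<le> T" if "v \<in> VL" for v
  proof -
    have vL: "v \<in> L" and nv: "norm v \<le> rn" using that by (auto simp: VL_def)
    have "real (card (set (Gam v))) \<le> real (length (Gam v))" by (simp add: card_length)
    also have "\<dots> = real (length (Gam v) - 1) + 1" using Gam[OF vL] by (cases "Gam v") auto
    also have "\<dots> \<le> real CARD('n) * BB * norm v + 1" using Gam[OF vL] by simp
    also have "\<dots> \<le> T" unfolding T_def using nv BB(1) by (intro add_right_mono mult_left_mono) auto
    finally show ?thesis .
  qed
  define G where "G = (\<lambda>(v,y). (l - y, l - y + v)) ` (SIGMA v:VL. set (Gam v))"
  define B1 where "B1 = (SIGMA x:Small. Sh x)"
  define B2 where "B2 = prod.swap ` B1"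
  define Z where "Z y = {x\<in>L. dist (-y) x \<le> R2}" for y
  have fZ: "finite (Z y)" and cZ: "real (card (Z y)) \<le> MM" for y
    using L_ball[OF R2_nonneg, of "-y"] by (auto simp: Z_def MM_def)
  define B3 where "B3 = (\<lambda>(v,(y,x)). (x, x+v)) ` (SIGMA v:VL. SIGMA y:set (Gam v). Z y)"
  have sub: "Bn \<Lambda> PP l n \<subseteq> G \<union> B1 \<union> B2 \<union> B3"
  proof
    fix pr assume pr: "pr \<in> Bn \<Lambda> PP l n"
    obtain l1 l2 where pr12: "pr = (l1, l2)" by (cases pr)
    have l1: "l1 \<in> \<Lambda>" and l2: "l2 \<in> \<Lambda>" and dl: "rn - 1 < dist l1 l2" "dist l1 l2 \<le> rn"
      and lP: "l \<in> set (PP l1 l2)"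
      using pr pr12 by (auto simp: Bn_def rn_def)
    show "pr \<in> G \<union> B1 \<union> B2 \<union> B3"
    proof (cases "norm l1 \<le> R2")
      case True
      then have "(l1, l2) \<in> B1" using l1 l2 dl by (auto simp: B1_def Small_def Sh_def)
      then show ?thesis using pr12 by simp
    next
      case n1F: False
      show ?thesis
      proof (cases "norm l2 \<le> R2")
        case True
        then have "(l2, l1) \<in> B1" using l1 l2 dl by (auto simp: B1_def Small_def Sh_def dist_commute)
        then have "prod.swap (l2, l1) \<in> B2" unfolding B2_def by (rule imageI)
        then show ?thesis using pr12 by simp
      next
        case n2F: False
        have RR2: "RR \<le> R2" using hh_nonneg by (simp add: R2_def)
        have l1L: "l1 \<in> L" using far_L[OF l1] n1F RR2 by simp
        have l2L: "l2 \<in> L" using far_L[OF l2] n2F RR2 by simp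
        define v where "v = l2 - l1"
        have vL: "v \<in> L" using L_diff[OF l2L l1L] by (simp add: v_def)
        have dv: "dist 0 v = dist l1 l2" by (simp add: v_def dist_norm norm_minus_commute)
        have vVL: "v \<in> VL" using vL dv dl by (simp add: VL_def)
        have l2v: "l2 = l1 + v" by (simp add: v_def)
        show ?thesis
        proof (cases "good l1 l2")
          case True
          then have "l \<in> set (map ((+) l1) (Gam v))" using lP by (simp add: PP_def v_def)
          then obtain y where y: "y \<in> set (Gam v)" "l = l1 + y" by auto
          have "(v, y) \<in> (SIGMA v:VL. set (Gam v))" using vVL y by simp
          then have "(\<lambda>(v,y). (l - y, l - y + v)) (v, y) \<in> G" unfolding G_def by (rule imageI)
          then show ?thesis using pr12 y l2v by simp
        next
          case False
          then obtain y where y: "y \<in> set (Gam v)" "norm (l1 + y) < R2"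
            using l1L l2L by (auto simp: good_def v_def not_le)
          have "l1 \<in> Z y" using l1L y by (simp add: Z_def dist_norm norm_minus_commute add.commute)
          then have "(v, (y, l1)) \<in> (SIGMA v:VL. SIGMA y:set (Gam v). Z y)" using vVL y by simp
          then have "(\<lambda>(v,(y,x)). (x, x+v)) (v, (y, l1)) \<in> B3" unfolding B3_def by (rule imageI)
          then show ?thesis using pr12 l2v by simp
        qed
      qed
    qed
  qed
  have fS1: "finite (SIGMA v:VL. set (Gam v))" using fVL by simp
  have fS3: "finite (SIGMA v:VL. SIGMA y:set (Gam v). Z y)" using fVL fZ by (intro finite_SigmaI) auto
  have fB1: "finite B1" using fSmall fSh by (simp add: B1_def)
  have fin: "finite (G \<union> B1 \<union> B2 \<union> B3)" using fS1 fS3 fB1 by (simp add: G_def B2_def B3_def)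
  have cardG: "real (card G) \<le> real (card VL) * T"
  proof -
    have "card G \<le> card (SIGMA v:VL. set (Gam v))" unfolding G_def by (rule card_image_le[OF fS1])
    also have "\<dots> = (\<Sum>v\<in>VL. card (set (Gam v)))" using fVL by (simp add: card_SigmaI)
    finally have c1: "card G \<le> (\<Sum>v\<in>VL. card (set (Gam v)))" .
    have "real (card G) \<le> (\<Sum>v\<in>VL. real (card (set (Gam v))))"
      unfolding of_nat_sum[symmetric] of_nat_le_iff by (rule c1)
    also have "\<dots> \<le> (\<Sum>v\<in>VL. T)" by (rule sum_mono) (rule lenG)
    finally show ?thesis by simp
  qed
  have cardB1: "real (card B1) \<le> real N2 * (real D0 + KS * rn^(d-1))"
  proof -
    have "card B1 = (\<Sum>x\<in>Small. card (Sh x))" unfolding B1_def using fSmall fSh by (simp add: card_SigmaI)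
    then have "real (card B1) = (\<Sum>x\<in>Small. real (card (Sh x)))" by simp
    also have "\<dots> \<le> (\<Sum>x\<in>Small. real D0 + KS * rn^(d-1))" by (rule sum_mono) (rule cSh)
    finally show ?thesis by (simp add: N2_def Small_def)
  qed
  have cardB2: "card B2 \<le> card B1" unfolding B2_def by (rule card_image_le[OF fB1])
  have cardB3: "real (card B3) \<le> real (card VL) * T * MM"
  proof -
    have "card B3 \<le> card (SIGMA v:VL. SIGMA y:set (Gam v). Z y)" unfolding B3_def by (rule card_image_le[OF fS3])
    also have "\<dots> = (\<Sum>v\<in>VL. card (SIGMA y:set (Gam v). Z y))" using fVL fZ by (simp add: card_SigmaI)
    also have "\<dots> = (\<Sum>v\<in>VL. \<Sum>y\<in>set (Gam v). card (Z y))" using fZ by (simp add: card_SigmaI)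
    finally have c3: "card B3 \<le> (\<Sum>v\<in>VL. \<Sum>y\<in>set (Gam v). card (Z y))" .
    have "real (card B3) \<le> (\<Sum>v\<in>VL. \<Sum>y\<in>set (Gam v). real (card (Z y)))"
      unfolding of_nat_sum[symmetric] of_nat_le_iff by (rule c3)
    also have "\<dots> \<le> (\<Sum>v\<in>VL. \<Sum>y\<in>set (Gam v). MM)" by (intro sum_mono cZ)
    also have "\<dots> = (\<Sum>v\<in>VL. real (card (set (Gam v))) * MM)" by simp
    also have "\<dots> \<le> (\<Sum>v\<in>VL. T * MM)"
      using lenG ee_pos R2_nonneg by (intro sum_mono mult_right_mono) (auto simp: MM_def)
    finally show ?thesis by simp
  qed
  have cBn: "card (Bn \<Lambda> PP l n) \<le> card G + card B1 + card B2 + card B3"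
  proof -
    have "card (Bn \<Lambda> PP l n) \<le> card (G \<union> B1 \<union> B2 \<union> B3)" by (rule card_mono[OF fin sub])
    also have "\<dots> \<le> card (G \<union> B1 \<union> B2) + card B3" by (rule card_Un_le)
    also have "\<dots> \<le> card (G \<union> B1) + card B2 + card B3" using card_Un_le by simp
    also have "\<dots> \<le> card G + card B1 + card B2 + card B3" using card_Un_le by simp
    finally show ?thesis .
  qed
  have MM0: "0 \<le> MM" using ee_pos R2_nonneg by (simp add: MM_def)
  have KS0: "0 \<le> KS" using KS_pos by simp
  have pw1: "rn^(d-1) * rn = rn^d" using d1 power_minus_mult[of d rn] by simp
  have pw2: "rn^(d-1) \<le> rn^d" using rn1 by (intro power_increasing) auto
  have pw3: "1 \<le> rn^d" using rn1 by simp
  have T1: "T \<le> (real CARD('n) * BB + 1) * rn" using rn1 BB(1) by (simp add: T_def algebra_simps)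
  have T0: "0 \<le> T" using BB(1) rn1 by (simp add: T_def)
  have VT: "real (card VL) * T \<le> KS * (real CARD('n) * BB + 1) * rn^d"
  proof -
    have "real (card VL) * T \<le> (KS * rn^(d-1)) * ((real CARD('n) * BB + 1) * rn)"
      using cVL T1 T0 KS0 rn1 by (intro mult_mono) auto
    also have "\<dots> = KS * (real CARD('n) * BB + 1) * (rn^(d-1) * rn)" by (simp add: algebra_simps)
    finally show ?thesis using pw1 by simp
  qed
  have B1b: "real N2 * (real D0 + KS * rn^(d-1)) \<le> real N2 * ((real D0 + KS) * rn^d)"
  proof (intro mult_left_mono)
    have "real D0 * 1 \<le> real D0 * rn^d" using pw3 by (intro mult_left_mono) auto
    moreover have "KS * rn^(d-1) \<le> KS * rn^d" using pw2 KS0 by (rule mult_left_mono)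
    ultimately show "real D0 + KS * rn^(d-1) \<le> (real D0 + KS) * rn^d" by (simp add: algebra_simps)
  qed simp
  have "real (card (Bn \<Lambda> PP l n)) \<le> real (card G) + real (card B1) + real (card B2) + real (card B3)"
    using cBn by linarith
  also have "\<dots> \<le> real (card VL) * T + 2 * (real N2 * (real D0 + KS * rn^(d-1))) + real (card VL) * T * MM"
    using cardG cardB1 cardB2 cardB3 by linarith
  also have "\<dots> = real (card VL) * T * (1 + MM) + 2 * (real N2 * (real D0 + KS * rn^(d-1)))"
    by (simp add: algebra_simps)
  also have "\<dots> \<le> (KS * (real CARD('n) * BB + 1) * rn^d) * (1 + MM) + 2 * (real N2 * ((real D0 + KS) * rn^d))"
  proof (rule add_mono)
    show "real (card VL) * T * (1 + MM) \<le> (KS * (real CARD('n) * BB + 1) * rn^d) * (1 + MM)"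
      by (rule mult_right_mono[OF VT]) (use MM0 in simp)
    show "2 * (real N2 * (real D0 + KS * rn^(d-1))) \<le> 2 * (real N2 * ((real D0 + KS) * rn^d))"
      using B1b by simp
  qed
  also have "\<dots> \<le> CC * rn^d" using pw3 by (simp add: CC_def algebra_simps)
  finally show ?thesis using finite_subset[OF sub fin] by (simp add: rn_def d_def)
qed

end

theorem mainTheorem10:
  fixes A :: "real^'n^'n" and \<Lambda> :: "(real^'n) set"
  assumes dim: "CARD('n) = 2 \<or> CARD('n) = 3"
    and inv: "invertible A"
    and vor: "\<And>l i. l \<in> hom_lattice A \<Longrightarrow>
                l + A *v axis i 1 \<in> vor_nbrs (hom_lattice A) l \<and>
                l - A *v axis i 1 \<in> vor_nbrs (hom_lattice A) l"
    and rc: "RC \<Lambda> A"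
  shows "\<exists>(P :: real^'n \<Rightarrow> real^'n \<Rightarrow> (real^'n) list) Cp C. Cp > 0 \<and> C > 0 \<and>
           (\<forall>l1\<in>\<Lambda>. \<forall>l2\<in>\<Lambda>. nn_path \<Lambda> Cp l1 l2 (P l1 l2)) \<and>
           (\<forall>l\<in>\<Lambda>. \<forall>n::nat. n \<ge> 1 \<longrightarrow>
              finite (Bn \<Lambda> P l n) \<and> real (card (Bn \<Lambda> P l n)) \<le> C * real n ^ CARD('n))"
proof -
  interpret latL A \<Lambda>
    by unfold_locales (use inv vor rc in auto)
  have CC: "CC > 0"
  proof -
    have "0 \<le> KS * (real CARD('n) * BB + 1) * (1 + MM)"
      using KS_pos BB(1) ee_pos R2_nonneg by (simp add: MM_def)
    moreover have "0 \<le> 2 * real N2 * (real D0 + KS)" using KS_pos by simp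
    ultimately show ?thesis by (simp add: CC_def)
  qed
  show ?thesis
    using Cpp_pos CC PP_ok count by blast
qed


end
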